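(* Let $X,Y$ be compact metric spaces with metrics $d,d'$, and let $f\colon X\to X$, $g\colon Y\to Y$ be continuous maps. Let $C\in\mathcal{C}(f)$, $D\in\mathcal{D}(C)$, $C'\in\mathcal{C}(g)$, and let $h\colon C\to C'$ be a homeomorphism with $h\circ f|_C=g|_{C'}\circ h$ (then $h(D)\in\mathcal{D}(C')$). Let $\mathcal{F},\mathcal{G}$ be full Furstenberg families, $n\ge2$ and $\delta>0$. If $g$ has the limit shadowing property and there is an $(\mathcal{F},\mathcal{G})$-$\delta$-scrambled $n$-tuple $(a_1,\dots,a_n)\in[V^s(D)]^n$ for $f$, then there are $\delta'>0$ and an $(\mathcal{F},\mathcal{G})$-$\delta'$-scrambled $n$-tuple $(b_1,\dots,b_n)\in[V^s(h(D))]^n$ for $g$.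
   Context: The following is defined for any continuous self-map $f$ of a compact metric space $(X,d)$ (and analogously for $g$ on $(Y,d')$). A $\delta$-chain of $f$ ($\delta>0$) is a finite sequence $(x_i)_{i=0}^k$, $k\ge1$, with $d(f(x_i),x_{i+1})\le\delta$ for $0\le i\le k-1$; it is a $\delta$-cycle if $x_0=x_k$, with length $k$. Write $x\to y$ if for every $\delta>0$ there is a $\delta$-chain from $x$ to $y$. Let $CR(f)=\{x\colon x\to x\}$; on $CR(f)$ let $x\leftrightarrow y$ iff $x\to y$ and $y\to x$; its classes are the chain components, forming $\mathcal{C}(f)$. For $C\in\mathcal{C}(f)$, $\delta>0$, let $m=m(C,\delta)$ be the gcd of the lengths of all $\delta$-cycles of $f|_C$, and for $x,y\in C$ let $x\sim_{C,\delta}y$ iff there is a $\delta$-chain of $f|_C$ from $x$ to $y$ of length divisible by $m$; $\mathcal{D}(C,\delta)$ is the set of its equivalence classes. Let $x\sim_C y$ iff $x\sim_{C,\delta}y$ for all $\delta>0$; $\mathcal{D}(C)$ is its set of classes. For $D\in\mathcal{D}(C)$, $D_\delta$ is the element of $\mathcal{D}(C,\delta)$ containing $D$. $W^s(C)=\{x\colon\lim_i d(f^i(x),C)=0\}$ and $V^s(D)=\bigcap_{\delta>0}\{x\in W^s(C)\colon\lim_i d(f^i(x),f^i(D_\delta))=0\}$. $g$ has the limit shadowing property if for every sequence $(y_i)_{i\ge0}$ in $Y$ with $\lim_i d'(g(y_i),y_{i+1})=0$ there is $y\in Y$ with $\lim_i d'(g^i(y),y_i)=0$. A Furstenberg family is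 a nonempty proper family $\mathcal{F}\subsetneq 2^{\mathbb{N}_0}$ closed under taking supersets; it is full if $\{i\in A\colon i\ge n\}\in\mathcal{F}$ for all $A\in\mathcal{F}$, $n\ge0$. For $x_1,\dots,x_n\in X$, $r>0$: $S_f(x_1,\dots,x_n;r)=\{i\in\mathbb{N}_0\colon\min_{j<k}d(f^i(x_j),f^i(x_k))>r\}$ and $T_f(x_1,\dots,x_n;r)=\{i\in\mathbb{N}_0\colon\max_{j<k}d(f^i(x_j),f^i(x_k))<r\}$. $(x_1,\dots,x_n)$ is $(\mathcal{F},\mathcal{G})$-$\delta$-scrambled for $f$ if $S_f(x_1,\dots,x_n;\delta)\in\mathcal{F}$ and $T_f(x_1,\dots,x_n;\epsilon)\in\mathcal{G}$ for all $\epsilon>0$ (analogously for $g$ with $d'$). *)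

theory Defs
  imports "HOL-Analysis.Analysis"
begin

text \<open>All notions are relativised to a carrier set S of a metric space type.\<close>

definition dchain :: "'a::metric_space set \<Rightarrow> ('a \<Rightarrow> 'a) \<Rightarrow> real \<Rightarrow> (nat \<Rightarrow> 'a) \<Rightarrow> nat \<Rightarrow> bool" where
  "dchain S f \<delta> x k \<longleftrightarrow> k \<ge> 1 \<and> (\<forall>i\<le>k. x i \<in> S) \<and> (\<forall>i<k. dist (f (x i)) (x (Suc i)) \<le> \<delta>)"

definition chain_to :: "'a::metric_space set \<Rightarrow> ('a \<Rightarrow> 'a) \<Rightarrow> 'a \<Rightarrow> 'a \<Rightarrow> bool" where
  "chain_to S f x y \<longleftrightarrow> (\<forall>\<delta>>0. \<exists>c k. dchain S f \<delta> c k \<and> c 0 = x \<and> c k = y)"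

definition CR :: "'a::metric_space set \<Rightarrow> ('a \<Rightarrow> 'a) \<Rightarrow> 'a set" where
  "CR S f = {x \<in> S. chain_to S f x x}"

definition chain_components :: "'a::metric_space set \<Rightarrow> ('a \<Rightarrow> 'a) \<Rightarrow> 'a set set" where
  "chain_components S f =
     {{y \<in> CR S f. chain_to S f x y \<and> chain_to S f y x} | x. x \<in> CR S f}"

definition cyc_gcd :: "'a::metric_space set \<Rightarrow> ('a \<Rightarrow> 'a) \<Rightarrow> real \<Rightarrow> nat" where
  "cyc_gcd C f \<delta> = Gcd {k. \<exists>c. dchain C f \<delta> c k \<and> c 0 = c k}"

definition sim_delta :: "'a::metric_space set \<Rightarrow> ('a \<Rightarrow> 'a) \<Rightarrow> real \<Rightarrow> 'a \<Rightarrow> 'a \<Rightarrow> bool" where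
  "sim_delta C f \<delta> x y \<longleftrightarrow>
     (\<exists>c k. dchain C f \<delta> c k \<and> c 0 = x \<and> c k = y \<and> cyc_gcd C f \<delta> dvd k)"

definition Dcl_delta :: "'a::metric_space set \<Rightarrow> ('a \<Rightarrow> 'a) \<Rightarrow> real \<Rightarrow> 'a set set" where
  "Dcl_delta C f \<delta> = {{y \<in> C. sim_delta C f \<delta> x y} | x. x \<in> C}"

definition sim_C :: "'a::metric_space set \<Rightarrow> ('a \<Rightarrow> 'a) \<Rightarrow> 'a \<Rightarrow> 'a \<Rightarrow> bool" where
  "sim_C C f x y \<longleftrightarrow> (\<forall>\<delta>>0. sim_delta C f \<delta> x y)"

definition Dcl :: "'a::metric_space set \<Rightarrow> ('a \<Rightarrow> 'a) \<Rightarrow> 'a set set" where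
  "Dcl C f = {{y \<in> C. sim_C C f x y} | x. x \<in> C}"

definition D_delta :: "'a::metric_space set \<Rightarrow> ('a \<Rightarrow> 'a) \<Rightarrow> real \<Rightarrow> 'a set \<Rightarrow> 'a set" where
  "D_delta C f \<delta> D = (THE E. E \<in> Dcl_delta C f \<delta> \<and> D \<subseteq> E)"

definition Ws :: "'a::metric_space set \<Rightarrow> ('a \<Rightarrow> 'a) \<Rightarrow> 'a set \<Rightarrow> 'a set" where
  "Ws X f C = {x \<in> X. (\<lambda>i. infdist ((f ^^ i) x) C) \<longlonglongrightarrow> 0}"

definition Vs :: "'a::metric_space set \<Rightarrow> ('a \<Rightarrow> 'a) \<Rightarrow> 'a set \<Rightarrow> 'a set \<Rightarrow> 'a set" where
  "Vs X f C D = (\<Inter>\<delta>\<in>{\<delta>. \<delta> > 0}.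
      {x \<in> Ws X f C. (\<lambda>i. infdist ((f ^^ i) x) ((f ^^ i) ` D_delta C f \<delta> D)) \<longlonglongrightarrow> 0})"

definition limit_shadowing :: "'a::metric_space set \<Rightarrow> ('a \<Rightarrow> 'a) \<Rightarrow> bool" where
  "limit_shadowing Y g \<longleftrightarrow>
     (\<forall>y. (\<forall>i. y i \<in> Y) \<and> (\<lambda>i. dist (g (y i)) (y (Suc i))) \<longlonglongrightarrow> 0 \<longrightarrow>
        (\<exists>z\<in>Y. (\<lambda>i. dist ((g ^^ i) z) (y i)) \<longlonglongrightarrow> 0))"

definition furstenberg_family :: "nat set set \<Rightarrow> bool" where
  "furstenberg_family F \<longleftrightarrow> F \<noteq> {} \<and> F \<noteq> UNIV \<and> (\<forall>A\<in>F. \<forall>B. A \<subseteq> B \<longrightarrow> B \<in> F)"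

definition full_family :: "nat set set \<Rightarrow> bool" where
  "full_family F \<longleftrightarrow> furstenberg_family F \<and> (\<forall>A\<in>F. \<forall>n. {i \<in> A. i \<ge> n} \<in> F)"

text \<open>Tuples (x_1,...,x_n) are indexed as x 0, ..., x (n-1).
  min over pairs > r is written as: all pairs > r; similarly max < r.\<close>
definition S_set :: "('a::metric_space \<Rightarrow> 'a) \<Rightarrow> nat \<Rightarrow> (nat \<Rightarrow> 'a) \<Rightarrow> real \<Rightarrow> nat set" where
  "S_set f n x r = {i. \<forall>j k. j < k \<and> k < n \<longrightarrow> dist ((f ^^ i) (x j)) ((f ^^ i) (x k)) > r}"

definition T_set :: "('a::metric_space \<Rightarrow> 'a) \<Rightarrow> nat \<Rightarrow> (nat \<Rightarrow> 'a) \<Rightarrow> real \<Rightarrow> nat set" where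
  "T_set f n x r = {i. \<forall>j k. j < k \<and> k < n \<longrightarrow> dist ((f ^^ i) (x j)) ((f ^^ i) (x k)) < r}"

definition scrambled :: "('a::metric_space \<Rightarrow> 'a) \<Rightarrow> nat set set \<Rightarrow> nat set set \<Rightarrow> real \<Rightarrow> nat \<Rightarrow> (nat \<Rightarrow> 'a) \<Rightarrow> bool" where
  "scrambled f F G \<delta> n x \<longleftrightarrow> S_set f n x \<delta> \<in> F \<and> (\<forall>\<epsilon>>0. T_set f n x \<epsilon> \<in> G)"

end

theory Submission
  imports Defs
begin


definition reach :: "'a::metric_space set \<Rightarrow> ('a \<Rightarrow> 'a) \<Rightarrow> real \<Rightarrow> 'a \<Rightarrow> 'a \<Rightarrow> bool" where
  "reach S f \<delta> x y \<longleftrightarrow> (\<exists>c k. dchain S f \<delta> c k \<and> c 0 = x \<and> c k = y)"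

lemma chain_to_reach: "chain_to S f x y \<longleftrightarrow> (\<forall>\<delta>>0. reach S f \<delta> x y)"
  by (simp add: chain_to_def reach_def)

lemma dchain_mono: "dchain S f \<delta> c k \<Longrightarrow> \<delta> \<le> \<delta>' \<Longrightarrow> dchain S f \<delta>' c k"
  unfolding dchain_def by force

lemma reach_mono: "reach S f \<delta> x y \<Longrightarrow> \<delta> \<le> \<delta>' \<Longrightarrow> reach S f \<delta>' x y"
  unfolding reach_def using dchain_mono by blast

lemma dchain_append:
  assumes "dchain S f \<delta> c k" "dchain S f \<delta> d l" "c k = d 0"
  shows "dchain S f \<delta> (\<lambda>i. if i \<le> k then c i else d (i - k)) (k + l)"
  unfolding dchain_def
proof (intro conjI allI impI)
  show "1 \<le> k + l" using assms(1) unfolding dchain_def by auto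
next
  fix i assume "i \<le> k + l"
  then show "(if i \<le> k then c i else d (i - k)) \<in> S" using assms(1,2) unfolding dchain_def by auto
next
  fix i assume i: "i < k + l"
  consider "i < k" | "i = k" | "i > k" by linarith
  then show "dist (f (if i \<le> k then c i else d (i - k))) (if Suc i \<le> k then c (Suc i) else d (Suc i - k)) \<le> \<delta>"
  proof cases
    case 1 then show ?thesis using assms(1) unfolding dchain_def by auto
  next
    case 2 then show ?thesis using assms unfolding dchain_def by auto
  next
    case 3
    then have "Suc i - k = Suc (i - k)" "i - k < l" using i by auto
    then show ?thesis using 3 assms(2) unfolding dchain_def by auto
  qed
qed

lemma reach_trans: "reach S f \<delta> x y \<Longrightarrow> reach S f \<delta> y z \<Longrightarrow> reach S f \<delta> x z"
  unfolding reach_def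
proof (elim exE conjE)
  fix c k d l assume a: "dchain S f \<delta> c k" "c 0 = x" "c k = y" "dchain S f \<delta> d l" "d 0 = y" "d l = z"
  then have "dchain S f \<delta> (\<lambda>i. if i \<le> k then c i else d (i - k)) (k + l)"
    by (intro dchain_append) auto
  moreover have "l \<ge> 1" using a unfolding dchain_def by auto
  ultimately show "\<exists>c k. dchain S f \<delta> c k \<and> c 0 = x \<and> c k = z" using a
    by (intro exI[of _ "\<lambda>i. if i \<le> k then c i else d (i - k)"] exI[of _ "k+l"]) auto
qed

lemma chain_to_trans: "chain_to S f x y \<Longrightarrow> chain_to S f y z \<Longrightarrow> chain_to S f x z"
  unfolding chain_to_reach using reach_trans by blast

lemma dchain_prefix: "dchain S f \<delta> c k \<Longrightarrow> 1 \<le> i \<Longrightarrow> i \<le> k \<Longrightarrow> dchain S f \<delta> c i"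
  unfolding dchain_def by auto

lemma dchain_suffix: "dchain S f \<delta> c k \<Longrightarrow> i < k \<Longrightarrow> dchain S f \<delta> (\<lambda>j. c (i + j)) (k - i)"
  unfolding dchain_def by auto

lemma dchain_last:
  assumes "dchain S f \<delta> c k" "y \<in> S" "dist (c k) y \<le> e"
  shows "dchain S f (\<delta> + e) (c(k:=y)) k"
  unfolding dchain_def
proof (intro conjI allI impI)
  show "1 \<le> k" using assms unfolding dchain_def by auto
  fix i assume "i \<le> k" then show "(c(k := y)) i \<in> S" using assms unfolding dchain_def by auto
next
  fix i assume i: "i < k"
  have "e \<ge> 0" using assms(3) zero_le_dist order_trans by blast
  show "dist (f ((c(k := y)) i)) ((c(k := y)) (Suc i)) \<le> \<delta> + e"
  proof (cases "Suc i = k")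
    case True
    have "dist (f (c i)) y \<le> dist (f (c i)) (c k) + dist (c k) y" by (rule dist_triangle)
    also have "\<dots> \<le> \<delta> + e" using assms i True unfolding dchain_def by force
    finally show ?thesis using True i by auto
  next
    case False
    then show ?thesis using assms i \<open>e \<ge> 0\<close> unfolding dchain_def by force
  qed
qed

lemma dchain_first:
  assumes "dchain S f \<delta> c k" "y \<in> S" "dist (f y) (f (c 0)) \<le> e"
  shows "dchain S f (\<delta> + e) (c(0:=y)) k"
  unfolding dchain_def
proof (intro conjI allI impI)
  show "1 \<le> k" using assms unfolding dchain_def by auto
  fix i assume "i \<le> k" then show "(c(0 := y)) i \<in> S" using assms unfolding dchain_def by auto
next
  fix i assume i: "i < k"
  have "e \<ge> 0" using assms(3) zero_le_dist order_trans by blast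
  show "dist (f ((c(0 := y)) i)) ((c(0 := y)) (Suc i)) \<le> \<delta> + e"
  proof (cases "i = 0")
    case True
    have "dist (f y) (c 1) \<le> dist (f y) (f (c 0)) + dist (f (c 0)) (c 1)" by (rule dist_triangle)
    also have "\<dots> \<le> e + \<delta>" using assms i True unfolding dchain_def by force
    finally show ?thesis using True i by auto
  next
    case False
    then show ?thesis using assms i \<open>e \<ge> 0\<close> unfolding dchain_def by force
  qed
qed

lemma approach_to:
  assumes "w \<in> S" "\<forall>\<delta>>0. \<forall>\<rho>>0. \<exists>v. reach S f \<delta> x v \<and> dist v w < \<rho>"
  shows "chain_to S f x w"
  unfolding chain_to_reach
proof (intro allI impI)
  fix \<delta> :: real assume d: "\<delta> > 0"
  then obtain v where v: "reach S f (\<delta>/2) x v" "dist v w < \<delta>/2" using assms(2) by (meson half_gt_zero)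
  then obtain c k where c: "dchain S f (\<delta>/2) c k" "c 0 = x" "c k = v" unfolding reach_def by blast
  have "dchain S f (\<delta>/2 + \<delta>/2) (c(k:=w)) k" using c v assms(1) by (intro dchain_last) auto
  moreover have "k \<noteq> 0" using c unfolding dchain_def by auto
  ultimately show "reach S f \<delta> x w" unfolding reach_def using c
    by (intro exI[of _ "c(k:=w)"] exI[of _ k]) auto
qed

lemma approach_from:
  assumes "continuous_on S f" "w \<in> S" "\<forall>\<delta>>0. \<forall>\<rho>>0. \<exists>v\<in>S. reach S f \<delta> v x \<and> dist v w < \<rho>"
  shows "chain_to S f w x"
  unfolding chain_to_reach
proof (intro allI impI)
  fix \<delta> :: real assume d: "\<delta> > 0"
  obtain \<rho> where r: "\<rho> > 0" "\<forall>v\<in>S. dist v w < \<rho> \<longrightarrow> dist (f v) (f w) < \<delta>/2"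
    using assms(1,2) d unfolding continuous_on_iff by (meson half_gt_zero)
  obtain v where v: "v \<in> S" "reach S f (\<delta>/2) v x" "dist v w < \<rho>" using assms(3) d r(1) by (meson half_gt_zero)
  then obtain c k where c: "dchain S f (\<delta>/2) c k" "c 0 = v" "c k = x" unfolding reach_def by blast
  have "dist (f w) (f (c 0)) \<le> \<delta>/2" using r v c by (simp add: dist_commute less_imp_le)
  then have "dchain S f (\<delta>/2 + \<delta>/2) (c(0:=w)) k" using c assms(2) by (intro dchain_first) auto
  moreover have "k \<noteq> 0" using c unfolding dchain_def by auto
  ultimately show "reach S f \<delta> w x" unfolding reach_def using c
    by (intro exI[of _ "c(0:=w)"] exI[of _ k]) auto
qed



lemma comp_props:
  assumes "C \<in> chain_components S f"
  shows "C \<subseteq> S" "C \<noteq> {}" "\<And>u v. u \<in> C \<Longrightarrow> v \<in> C \<Longrightarrow> chain_to S f u v"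
    "\<And>u w. w \<in> S \<Longrightarrow> u \<in> C \<Longrightarrow> chain_to S f u w \<Longrightarrow> chain_to S f w u \<Longrightarrow> w \<in> C"
proof -
  obtain x where x: "x \<in> CR S f" "C = {y \<in> CR S f. chain_to S f x y \<and> chain_to S f y x}"
    using assms unfolding chain_components_def by blast
  show "C \<subseteq> S" using x unfolding CR_def by auto
  show "C \<noteq> {}" using x unfolding CR_def by auto
  show "\<And>u v. u \<in> C \<Longrightarrow> v \<in> C \<Longrightarrow> chain_to S f u v" using x chain_to_trans by blast
  fix u w assume a: "w \<in> S" "u \<in> C" "chain_to S f u w" "chain_to S f w u"
  then have "chain_to S f w w" using chain_to_trans by blast
  moreover have "chain_to S f x w" "chain_to S f w x" using a x chain_to_trans by blast+
  ultimately show "w \<in> C" using x a unfolding CR_def by auto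
qed

lemma comp_closed:
  assumes "closed S" "continuous_on S f" "C \<in> chain_components S f"
  shows "closed C"
proof -
  note cp = comp_props[OF assms(3)]
  obtain u where u: "u \<in> C" using cp(2) by auto
  have "closure C \<subseteq> C"
  proof
    fix w assume w: "w \<in> closure C"
    have wS: "w \<in> S" using w cp(1) assms(1) closure_minimal by blast
    have ap: "\<forall>\<rho>>0. \<exists>v\<in>C. dist v w < \<rho>" using w unfolding closure_approachable by auto
    have "chain_to S f u w"
      apply (rule approach_to[OF wS])
      using ap cp(3)[OF u] unfolding chain_to_reach by blast
    moreover have "chain_to S f w u"
      apply (rule approach_from[OF assms(2) wS])
      using ap cp(3)[OF _ u] cp(1) unfolding chain_to_reach by blast
    ultimately show "w \<in> C" using cp(4) wS u by blast
  qed
  then show ?thesis using closure_subset_eq by blast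
qed

lemma comp_invariant:
  assumes "continuous_on S f" "f ` S \<subseteq> S" "C \<in> chain_components S f" "u \<in> C"
  shows "f u \<in> C"
proof -
  note cp = comp_props[OF assms(3)]
  have uS: "u \<in> S" and fuS: "f u \<in> S" using assms cp(1) by auto
  have "chain_to S f u (f u)"
    unfolding chain_to_def dchain_def
    using uS fuS by (intro allI impI exI[of _ "\<lambda>i. if i = 0 then u else f u"] exI[of _ 1]) auto
  moreover have "chain_to S f (f u) u"
  proof (rule approach_from[OF assms(1) fuS], intro allI impI)
    fix \<delta> \<rho> :: real assume d: "\<delta> > 0" "\<rho> > 0"
    define \<delta>1 where "\<delta>1 = min \<delta> (\<rho>/2)"
    have "\<delta>1 > 0" using d by (simp add: \<delta>1_def)
    then obtain c k where c: "dchain S f \<delta>1 c k" "c 0 = u" "c k = u"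
      using cp(3)[OF assms(4) assms(4)] unfolding chain_to_def by blast
    have c1: "c 1 \<in> S" "dist (c 1) (f u) < \<rho>" using c d unfolding dchain_def \<delta>1_def
      by (auto simp: dist_commute)
    have "reach S f \<delta> (c 1) u"
    proof (cases "k = 1")
      case True
      then show ?thesis using cp(3)[OF assms(4) assms(4)] d c unfolding chain_to_reach by auto
    next
      case False
      then have "dchain S f \<delta>1 (\<lambda>j. c (1 + j)) (k - 1)" using c dchain_suffix[OF c(1), of 1]
        unfolding dchain_def by auto
      then have "dchain S f \<delta> (\<lambda>j. c (1 + j)) (k - 1)" using dchain_mono \<delta>1_def by fastforce
      then show ?thesis unfolding reach_def using c False
        by (intro exI[of _ "\<lambda>j. c (1 + j)"] exI[of _ "k-1"]) (auto simp: dchain_def)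
    qed
    then show "\<exists>v\<in>S. reach S f \<delta> v u \<and> dist v (f u) < \<rho>" using c1 by blast
  qed
  ultimately show ?thesis using cp(4)[OF fuS assms(4)] by blast
qed



lemma comp_CT:
  assumes "compact S" "continuous_on S f" "C \<in> chain_components S f"
    "x \<in> C" "y \<in> C" "\<delta> > 0"
  shows "reach C f \<delta> x y"
proof -
  note cp = comp_props[OF assms(3)]
  have xS: "x \<in> S" using assms cp(1) by auto
  obtain \<epsilon> where e: "\<epsilon> > 0" "\<forall>u\<in>S. \<forall>v\<in>S. dist v u < \<epsilon> \<longrightarrow> dist (f v) (f u) < \<delta>/3"
    using compact_uniformly_continuous[OF assms(2,1)] assms(6)
    unfolding uniformly_continuous_on_def by (metis divide_pos_pos zero_less_numeral)
  define \<epsilon>1 where "\<epsilon>1 = min \<epsilon> (\<delta>/3)"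
  have e1: "\<epsilon>1 > 0" using e assms(6) by (simp add: \<epsilon>1_def)
  have claim: "\<exists>\<rho>>0. \<forall>w\<in>S. reach S f \<rho> x w \<and> reach S f \<rho> w x \<longrightarrow> (\<exists>p\<in>C. dist w p < \<epsilon>1)"
  proof (rule ccontr)
    assume neg: "\<not> ?thesis"
    then have "\<forall>n::nat. \<exists>w. w \<in> S \<and> reach S f (1/(real n+1)) x w \<and> reach S f (1/(real n+1)) w x \<and> (\<forall>p\<in>C. dist w p \<ge> \<epsilon>1)"
    proof (intro allI)
      fix n :: nat
      have "1/(real n+1) > 0" by simp
      then show "\<exists>w. w \<in> S \<and> reach S f (1/(real n+1)) x w \<and> reach S f (1/(real n+1)) w x \<and> (\<forall>p\<in>C. dist w p \<ge> \<epsilon>1)"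
        using neg by (meson not_le)
    qed
    then obtain W where W: "\<And>n. W n \<in> S" "\<And>n. reach S f (1/(real n+1)) x (W n)"
      "\<And>n. reach S f (1/(real n+1)) (W n) x" "\<And>n. \<forall>p\<in>C. dist (W n) p \<ge> \<epsilon>1"
      by metis
    have "\<exists>l\<in>S. \<exists>r. strict_mono r \<and> (W \<circ> r) \<longlonglongrightarrow> l"
      using compact_imp_seq_compact[OF assms(1)] W(1) unfolding seq_compact_def by blast
    then obtain l r where lr: "l \<in> S" "strict_mono r" "(W \<circ> r) \<longlonglongrightarrow> l" by blast
    have small: "\<forall>\<^sub>F m in sequentially. 1/(real (r m)+1) \<le> d" if dpos: "d > 0" for d
    proof -
      obtain N where N: "inverse (real (Suc N)) < d" using reals_Archimedean[OF dpos] by blast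
      show ?thesis unfolding eventually_sequentially
      proof (intro exI allI impI)
        fix m assume "N \<le> m"
        then have "N \<le> r m" using seq_suble[OF lr(2)] le_trans by blast
        then have "1/(real (r m)+1) \<le> 1/(real N + 1)" by (simp add: frac_le)
        also have "\<dots> < d" using N by (simp add: inverse_eq_divide add.commute)
        finally show "1/(real (r m)+1) \<le> d" by simp
      qed
    qed
    have close: "\<forall>\<^sub>F m in sequentially. dist (W (r m)) l < d" if "d > 0" for d
      using lr(3) that unfolding tendsto_iff by (simp add: o_def)
    have ex: "\<exists>m. 1/(real (r m)+1) \<le> d \<and> dist (W (r m)) l < \<rho>" if "d > 0" "\<rho> > 0" for d \<rho>
      using eventually_happens'[OF _ eventually_conj[OF small[OF that(1)] close[OF that(2)]]] by auto
    have "chain_to S f x l"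
    proof (rule approach_to[OF lr(1)], intro allI impI)
      fix d \<rho> :: real assume "d > 0" "\<rho> > 0"
      then obtain m where m: "1/(real (r m)+1) \<le> d" "dist (W (r m)) l < \<rho>" using ex by blast
      then show "\<exists>v. reach S f d x v \<and> dist v l < \<rho>" using W(2) reach_mono by blast
    qed
    moreover have "chain_to S f l x"
    proof (rule approach_from[OF assms(2) lr(1)], intro allI impI)
      fix d \<rho> :: real assume "d > 0" "\<rho> > 0"
      then obtain m where m: "1/(real (r m)+1) \<le> d" "dist (W (r m)) l < \<rho>" using ex by blast
      then show "\<exists>v\<in>S. reach S f d v x \<and> dist v l < \<rho>" using W(1,3) reach_mono by blast
    qed
    ultimately have "l \<in> C" using cp(4)[OF lr(1) assms(4)] by blast
    obtain m where "dist (W (r m)) l < \<epsilon>1" using eventually_happens'[OF _ close[OF e1]] by auto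
    then show False using W(4) \<open>l \<in> C\<close> by (meson not_le)
  qed
  then obtain \<rho> where r: "\<rho> > 0" "\<forall>w\<in>S. reach S f \<rho> x w \<and> reach S f \<rho> w x \<longrightarrow> (\<exists>p\<in>C. dist w p < \<epsilon>1)"
    by blast
  define \<rho>1 where "\<rho>1 = min \<rho> (\<delta>/3)"
  have r1: "\<rho>1 > 0" using r assms(6) by (simp add: \<rho>1_def)
  obtain c k where c: "dchain S f \<rho>1 c k" "c 0 = x" "c k = y"
    using cp(3)[OF assms(4,5)] r1 unfolding chain_to_def by blast
  have yx: "reach S f \<rho>1 y x" using cp(3)[OF assms(5,4)] r1 unfolding chain_to_reach by blast
  have k1: "k \<ge> 1" using c unfolding dchain_def by auto
  have near: "\<exists>p\<in>C. dist (c i) p < \<epsilon>1" if i: "i \<le> k" for i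
  proof (cases "i = 0")
    case True then show ?thesis using c assms(4) e1 by (metis dist_self)
  next
    case False
    have ciS: "c i \<in> S" using c i unfolding dchain_def by auto
    have a1: "reach S f \<rho>1 x (c i)" unfolding reach_def using c False i dchain_prefix[OF c(1), of i] by auto
    have a2: "reach S f \<rho>1 (c i) x"
    proof (cases "i = k")
      case True then show ?thesis using yx c by simp
    next
      case False
      then have "reach S f \<rho>1 (c i) y" unfolding reach_def using c i dchain_suffix[OF c(1), of i]
        by (intro exI[of _ "\<lambda>j. c (i + j)"] exI[of _ "k - i"]) auto
      then show ?thesis using yx reach_trans by blast
    qed
    have "\<rho>1 \<le> \<rho>" by (simp add: \<rho>1_def)
    then show ?thesis using r(2) ciS a1 a2 reach_mono by blast
  qed
  define p where "p i = (if i = 0 then x else if i = k then y else SOME q. q \<in> C \<and> dist (c i) q < \<epsilon>1)" for i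
  have p: "p i \<in> C \<and> dist (c i) (p i) < \<epsilon>1" if "i \<le> k" for i
  proof -
    consider "i = 0" | "i \<noteq> 0" "i = k" | "i \<noteq> 0" "i \<noteq> k" by blast
    then show ?thesis
    proof cases
      case 1 then show ?thesis using c assms(4) e1 by (simp add: p_def)
    next
      case 2 then show ?thesis using c assms(5) e1 by (simp add: p_def)
    next
      case 3 then show ?thesis using near[OF that] someI_ex[of "\<lambda>q. q \<in> C \<and> dist (c i) q < \<epsilon>1"]
        by (simp add: p_def) blast
    qed
  qed
  have "dchain C f \<delta> p k"
    unfolding dchain_def
  proof (intro conjI allI impI)
    show "1 \<le> k" by (rule k1)
    fix i assume "i \<le> k" then show "p i \<in> C" using p by blast
  next
    fix i assume i: "i < k"
    have pi: "p i \<in> C" "dist (c i) (p i) < \<epsilon>1" using p i by auto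
    have pi1: "p (Suc i) \<in> C" "dist (c (Suc i)) (p (Suc i)) < \<epsilon>1" using p i by auto
    have ciS: "c i \<in> S" using c i unfolding dchain_def by auto
    have "dist (f (p i)) (f (c i)) < \<delta>/3"
      using e(2) ciS pi cp(1) by (metis \<epsilon>1_def dist_commute min_less_iff_conj subsetD)
    moreover have "dist (f (c i)) (c (Suc i)) \<le> \<delta>/3" using c i unfolding dchain_def \<rho>1_def by force
    moreover have "dist (c (Suc i)) (p (Suc i)) < \<delta>/3" using pi1 unfolding \<epsilon>1_def by simp
    moreover have "dist (f (p i)) (p (Suc i)) \<le> dist (f (p i)) (f (c i)) + dist (f (c i)) (c (Suc i)) + dist (c (Suc i)) (p (Suc i))"
      by (metis add.commute add_le_cancel_left dist_triangle order_trans)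
    ultimately show "dist (f (p i)) (p (Suc i)) \<le> \<delta>" by linarith
  qed
  moreover have "p 0 = x" "p k = y" using k1 by (auto simp: p_def)
  ultimately show ?thesis unfolding reach_def by blast
qed



lemma cyc_dvd: "dchain C f \<delta> c k \<Longrightarrow> c 0 = c k \<Longrightarrow> cyc_gcd C f \<delta> dvd k"
  unfolding cyc_gcd_def by (rule Gcd_dvd) blast

lemma sim_refl:
  assumes "\<And>u v. u \<in> C \<Longrightarrow> v \<in> C \<Longrightarrow> reach C f \<delta> u v" "x \<in> C"
  shows "sim_delta C f \<delta> x x"
  using assms cyc_dvd unfolding sim_delta_def reach_def by metis

lemma sim_trans:
  assumes "sim_delta C f \<delta> x y" "sim_delta C f \<delta> y z"
  shows "sim_delta C f \<delta> x z"
proof -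
  obtain c k where c: "dchain C f \<delta> c k" "c 0 = x" "c k = y" "cyc_gcd C f \<delta> dvd k"
    using assms(1) unfolding sim_delta_def by blast
  obtain d l where d: "dchain C f \<delta> d l" "d 0 = y" "d l = z" "cyc_gcd C f \<delta> dvd l"
    using assms(2) unfolding sim_delta_def by blast
  have "dchain C f \<delta> (\<lambda>i. if i \<le> k then c i else d (i - k)) (k + l)"
    using c d by (intro dchain_append) auto
  moreover have "l \<ge> 1" using d unfolding dchain_def by auto
  ultimately show ?thesis unfolding sim_delta_def using c d
    by (intro exI[of _ "\<lambda>i. if i \<le> k then c i else d (i - k)"] exI[of _ "k+l"]) auto
qed

lemma sim_sym:
  assumes "\<And>u v. u \<in> C \<Longrightarrow> v \<in> C \<Longrightarrow> reach C f \<delta> u v" "sim_delta C f \<delta> x y"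
  shows "sim_delta C f \<delta> y x"
proof -
  obtain c k where c: "dchain C f \<delta> c k" "c 0 = x" "c k = y" "cyc_gcd C f \<delta> dvd k"
    using assms(2) unfolding sim_delta_def by blast
  have "x \<in> C" "y \<in> C" using c unfolding dchain_def by auto
  then obtain d l where d: "dchain C f \<delta> d l" "d 0 = y" "d l = x"
    using assms(1) unfolding reach_def by blast
  have "dchain C f \<delta> (\<lambda>i. if i \<le> k then c i else d (i - k)) (k + l)"
    using c d by (intro dchain_append) auto
  moreover have "l \<ge> 1" using d unfolding dchain_def by auto
  ultimately have "cyc_gcd C f \<delta> dvd (k + l)" using c d cyc_dvd[of C f \<delta> _ "k+l"] by auto
  then have "cyc_gcd C f \<delta> dvd l" using c(4) by (simp add: dvd_add_right_iff)
  then show ?thesis unfolding sim_delta_def using d by blast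
qed

lemma D_delta_eq:
  assumes "\<And>u v. u \<in> C \<Longrightarrow> v \<in> C \<Longrightarrow> reach C f \<delta> u v" "x0 \<in> C" "x0 \<in> D"
    "D \<subseteq> {y \<in> C. sim_delta C f \<delta> x0 y}"
  shows "D_delta C f \<delta> D = {y \<in> C. sim_delta C f \<delta> x0 y}"
  unfolding D_delta_def
proof (rule the_equality)
  show "{y \<in> C. sim_delta C f \<delta> x0 y} \<in> Dcl_delta C f \<delta> \<and> D \<subseteq> {y \<in> C. sim_delta C f \<delta> x0 y}"
    using assms(2,4) unfolding Dcl_delta_def by blast
next
  fix E assume E: "E \<in> Dcl_delta C f \<delta> \<and> D \<subseteq> E"
  then obtain x1 where x1: "x1 \<in> C" "E = {y \<in> C. sim_delta C f \<delta> x1 y}" unfolding Dcl_delta_def by blast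
  then have "sim_delta C f \<delta> x1 x0" using E assms(3) by auto
  moreover have "sim_delta C f \<delta> x0 x1" using sim_sym[OF assms(1)] calculation by blast
  ultimately show "E = {y \<in> C. sim_delta C f \<delta> x0 y}" unfolding x1(2)
    using sim_trans[of C f \<delta> x0 x1] sim_trans[of C f \<delta> x1 x0] by blast
qed

lemma transfer:
  assumes "\<And>x. x \<in> C \<Longrightarrow> h x \<in> C'" "\<And>x. x \<in> C \<Longrightarrow> h (f x) = g (h x)" "\<And>x. x \<in> C \<Longrightarrow> f x \<in> C"
    "\<And>u v. u \<in> C \<Longrightarrow> v \<in> C \<Longrightarrow> dist u v \<le> \<eta> \<Longrightarrow> dist (h u) (h v) \<le> \<delta>'"
  shows "sim_delta C f \<eta> x y \<Longrightarrow> sim_delta C' g \<delta>' (h x) (h y)"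
proof -
  have ch: "dchain C' g \<delta>' (h \<circ> c) k" if "dchain C f \<eta> c k" for c k
    unfolding dchain_def
  proof (intro conjI allI impI)
    show "1 \<le> k" using that unfolding dchain_def by auto
    fix i assume "i \<le> k" then show "(h \<circ> c) i \<in> C'" using that assms(1) unfolding dchain_def by auto
  next
    fix i assume i: "i < k"
    have ci: "c i \<in> C" "c (Suc i) \<in> C" "dist (f (c i)) (c (Suc i)) \<le> \<eta>"
      using that i unfolding dchain_def by auto
    then have "dist (h (f (c i))) (h (c (Suc i))) \<le> \<delta>'" using assms(3,4) by blast
    then show "dist (g ((h \<circ> c) i)) ((h \<circ> c) (Suc i)) \<le> \<delta>'" using assms(2) ci by simp
  qed
  have dv: "cyc_gcd C' g \<delta>' dvd cyc_gcd C f \<eta>"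
    unfolding cyc_gcd_def[of C f]
  proof (rule Gcd_greatest)
    fix b assume "b \<in> {k. \<exists>c. dchain C f \<eta> c k \<and> c 0 = c k}"
    then obtain c where c: "dchain C f \<eta> c b" "c 0 = c b" by blast
    show "cyc_gcd C' g \<delta>' dvd b" using cyc_dvd[OF ch[OF c(1)]] c(2) by simp
  qed
  assume "sim_delta C f \<eta> x y"
  then obtain c k where c: "dchain C f \<eta> c k" "c 0 = x" "c k = y" "cyc_gcd C f \<eta> dvd k"
    unfolding sim_delta_def by blast
  then show "sim_delta C' g \<delta>' (h x) (h y)" unfolding sim_delta_def
    using ch[OF c(1)] dv dvd_trans by (intro exI[of _ "h \<circ> c"] exI[of _ k]) auto
qed



lemma uc_seq:
  assumes "uniformly_continuous_on S h" "\<And>i. u i \<in> S" "\<And>i. v i \<in> S" "(\<lambda>i. dist (u i) (v i)) \<longlonglongrightarrow> 0"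
  shows "(\<lambda>i. dist (h (u i)) (h (v i))) \<longlonglongrightarrow> 0"
  unfolding tendsto_iff
proof (intro allI impI)
  fix e :: real assume e: "e > 0"
  then obtain d where d: "d > 0" "\<forall>x\<in>S. \<forall>x'\<in>S. dist x' x < d \<longrightarrow> dist (h x') (h x) < e"
    using assms(1) unfolding uniformly_continuous_on_def by blast
  have "\<forall>\<^sub>F i in sequentially. dist (dist (u i) (v i)) 0 < d" using assms(4) d(1) unfolding tendsto_iff by blast
  then show "\<forall>\<^sub>F i in sequentially. dist (dist (h (u i)) (h (v i))) 0 < e"
  proof (rule eventually_mono)
    fix i assume "dist (dist (u i) (v i)) 0 < d"
    then have "dist (u i) (v i) < d" by simp
    then have "dist (h (u i)) (h (v i)) < e" using d(2) assms(2,3) by blast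
    then show "dist (dist (h (u i)) (h (v i))) 0 < e" by simp
  qed
qed

lemma tri0:
  assumes "(\<lambda>i. dist (a i) (b i)) \<longlonglongrightarrow> 0" "(\<lambda>i. dist (b i) (c i)) \<longlonglongrightarrow> 0"
  shows "(\<lambda>i. dist (a i) (c i)) \<longlonglongrightarrow> 0"
proof (rule Lim_null_comparison)
  show "\<forall>\<^sub>F i in sequentially. norm (dist (a i) (c i)) \<le> dist (a i) (b i) + dist (b i) (c i)"
    by (simp add: dist_triangle)
  show "(\<lambda>i. dist (a i) (b i) + dist (b i) (c i)) \<longlonglongrightarrow> 0" using tendsto_add_zero[OF assms] .
qed

lemma dist0_commute: "(\<lambda>i. dist (a i) (b i)) \<longlonglongrightarrow> 0 \<Longrightarrow> (\<lambda>i. dist (b i) (a i)) \<longlonglongrightarrow> 0"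
  by (simp add: dist_commute)

lemma infdist_seq_le:
  assumes "(\<lambda>i. dist (u i) (w i)) \<longlonglongrightarrow> 0" "\<And>i. w i \<in> A i"
  shows "(\<lambda>i. infdist (u i) (A i)) \<longlonglongrightarrow> 0"
proof (rule Lim_null_comparison)
  show "\<forall>\<^sub>F i in sequentially. norm (infdist (u i) (A i)) \<le> dist (u i) (w i)"
    using assms(2) by (simp add: infdist_le infdist_nonneg)
qed (rule assms(1))

lemma infdist_pick:
  assumes "A \<noteq> {}" "e > 0"
  shows "\<exists>a\<in>A. dist x a < infdist x A + e"
proof -
  have "(INF a\<in>A. dist x a) < infdist x A + e" using assms by (simp add: infdist_notempty)
  then show ?thesis using assms(1) by (subst (asm) cINF_less_iff) auto
qed

lemma seq_pick:
  assumes "\<And>i. A i \<noteq> {}" "(\<lambda>i. infdist (u i) (A i)) \<longlonglongrightarrow> 0"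
  shows "\<exists>w. (\<forall>i. w i \<in> A i) \<and> (\<lambda>i. dist (u i) (w i)) \<longlonglongrightarrow> 0"
proof -
  have "\<forall>i. \<exists>a. a \<in> A i \<and> dist (u i) a < infdist (u i) (A i) + inverse (real (Suc i))"
    using infdist_pick[OF assms(1)] by (meson inverse_positive_iff_positive of_nat_0_less_iff zero_less_Suc)
  then obtain w where w: "\<And>i. w i \<in> A i" "\<And>i. dist (u i) (w i) < infdist (u i) (A i) + inverse (real (Suc i))"
    by metis
  have "(\<lambda>i. dist (u i) (w i)) \<longlonglongrightarrow> 0"
  proof (rule Lim_null_comparison)
    show "\<forall>\<^sub>F i in sequentially. norm (dist (u i) (w i)) \<le> infdist (u i) (A i) + inverse (real (Suc i))"
      using w(2) by (simp add: less_imp_le)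
    show "(\<lambda>i. infdist (u i) (A i) + inverse (real (Suc i))) \<longlonglongrightarrow> 0"
      using tendsto_add_zero[OF assms(2) LIMSEQ_inverse_real_of_nat] .
  qed
  then show ?thesis using w(1) by blast
qed

lemma dist4: "dist a d \<le> dist a b + dist b c + dist c (d::'a::metric_space)"
  using dist_triangle[of a d c] dist_triangle[of a c b] by linarith

lemma iter_in: "(\<And>x. x \<in> S \<Longrightarrow> f x \<in> S) \<Longrightarrow> x \<in> S \<Longrightarrow> (f ^^ i) x \<in> S"
  by (induction i) auto

lemma iter_conj:
  assumes "\<And>x. x \<in> C \<Longrightarrow> f x \<in> C" "\<And>x. x \<in> C \<Longrightarrow> h (f x) = g (h x)" "x \<in> C"
  shows "h ((f ^^ i) x) = (g ^^ i) (h x)"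
proof (induction i)
  case (Suc i)
  have "(f ^^ i) x \<in> C" using iter_in[of C f, OF assms(1) assms(3)] .
  then show ?case using Suc assms(2) by simp
qed simp



theorem theorem1p3:
  fixes X :: "'a::metric_space set" and Y :: "'b::metric_space set"
    and f :: "'a \<Rightarrow> 'a" and g :: "'b \<Rightarrow> 'b"
    and C D :: "'a set" and C' :: "'b set" and h :: "'a \<Rightarrow> 'b"
    and F G :: "nat set set" and n :: nat and \<delta> :: real and a :: "nat \<Rightarrow> 'a"
  assumes "compact X" "continuous_on X f" "f ` X \<subseteq> X"
    and "compact Y" "continuous_on Y g" "g ` Y \<subseteq> Y"
    and "C \<in> chain_components X f" "D \<in> Dcl C f" "C' \<in> chain_components Y g"
    and "\<exists>h'. homeomorphism C C' h h'"
    and "\<forall>x\<in>C. h (f x) = g (h x)"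
    and "full_family F" "full_family G"
    and "n \<ge> 2" "\<delta> > 0"
    and "limit_shadowing Y g"
    and "\<forall>j<n. a j \<in> Vs X f C D"
    and "scrambled f F G \<delta> n a"
  shows "\<exists>\<delta>'>0. \<exists>b. (\<forall>j<n. b j \<in> Vs Y g C' (h ` D)) \<and> scrambled g F G \<delta>' n b"
proof -
  obtain h' where hom: "homeomorphism C C' h h'" using assms(10) by blast
  have hC: "h ` C = C'" "h' ` C' = C" "\<And>x. x \<in> C \<Longrightarrow> h' (h x) = x" "continuous_on C h" "continuous_on C' h'"
    using hom unfolding homeomorphism_def by auto
  have hin: "\<And>x. x \<in> C \<Longrightarrow> h x \<in> C'" using hC(1) by blast
  have hconj: "\<And>x. x \<in> C \<Longrightarrow> h (f x) = g (h x)" using assms(11) by blast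
  have CX: "C \<subseteq> X" using comp_props(1)[OF assms(7)] .
  have CY: "C' \<subseteq> Y" using comp_props(1)[OF assms(9)] .
  have "compact (X \<inter> C)"
    using compact_Int_closed[OF assms(1) comp_closed[OF compact_imp_closed[OF assms(1)] assms(2,7)]] .
  then have Ccomp: "compact C" using CX by (simp add: Int_absorb1)
  have C'comp: "compact C'" using compact_continuous_image[OF hC(4) Ccomp] hC(1) by simp
  have fuc: "uniformly_continuous_on X f" using compact_uniformly_continuous[OF assms(2,1)] .
  have huc: "uniformly_continuous_on C h" using compact_uniformly_continuous[OF hC(4) Ccomp] .
  have h'uc: "uniformly_continuous_on C' h'" using compact_uniformly_continuous[OF hC(5) C'comp] .
  have finv: "\<And>x. x \<in> C \<Longrightarrow> f x \<in> C" using comp_invariant[OF assms(2,3,7)] .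
  have fXinv: "\<And>x. x \<in> X \<Longrightarrow> f x \<in> X" using assms(3) by blast
  have CT: "\<And>e u v. e > 0 \<Longrightarrow> u \<in> C \<Longrightarrow> v \<in> C \<Longrightarrow> reach C f e u v"
    using comp_CT[OF assms(1,2,7)] by blast
  have CT': "\<And>e u v. e > 0 \<Longrightarrow> u \<in> C' \<Longrightarrow> v \<in> C' \<Longrightarrow> reach C' g e u v"
    using comp_CT[OF assms(4,5,9)] by blast
  obtain x0 where x0: "x0 \<in> C" "D = {y \<in> C. sim_C C f x0 y}" using assms(8) unfolding Dcl_def by blast
  have x0D: "x0 \<in> D" using x0 sim_refl[OF CT] unfolding sim_C_def by blast
  have Deq: "D_delta C f \<eta> D = {y \<in> C. sim_delta C f \<eta> x0 y}" if "\<eta> > 0" for \<eta>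
    using D_delta_eq[OF CT[OF that] x0(1) x0D] x0(2) that unfolding sim_C_def by blast
  have hD: "\<exists>\<eta>>0. D_delta C f \<eta> D \<noteq> {} \<and> D_delta C f \<eta> D \<subseteq> C \<and>
      h ` D_delta C f \<eta> D \<subseteq> D_delta C' g e (h ` D)" if e: "e > 0" for e
  proof -
    obtain d where d: "d > 0" "\<forall>x\<in>C. \<forall>x'\<in>C. dist x' x < d \<longrightarrow> dist (h x') (h x) < e"
      using huc e unfolding uniformly_continuous_on_def by blast
    define \<eta> where "\<eta> = d/2"
    have eta: "\<eta> > 0" using d by (simp add: \<eta>_def)
    have tr: "sim_delta C' g e (h x) (h y)" if "sim_delta C f \<eta> x y" for x y
    proof (rule transfer[where C=C and C'=C' and h=h and f=f and g=g and \<eta>=\<eta> and \<delta>'=e])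
      show "sim_delta C f \<eta> x y" by (rule that)
    next
      show "\<And>x. x \<in> C \<Longrightarrow> h x \<in> C'" by (rule hin)
    next
      show "\<And>x. x \<in> C \<Longrightarrow> h (f x) = g (h x)" by (rule hconj)
    next
      show "\<And>x. x \<in> C \<Longrightarrow> f x \<in> C" by (rule finv)
    next
      fix u v assume "u \<in> C" "v \<in> C" "dist u v \<le> \<eta>"
      then show "dist (h u) (h v) \<le> e" using d \<eta>_def by (smt (verit, best) dist_commute field_sum_of_halves)
    qed
    have hD_sub: "h ` D \<subseteq> {y \<in> C'. sim_delta C' g e (h x0) y}"
      using x0 tr eta hin unfolding sim_C_def by blast
    have Deq': "D_delta C' g e (h ` D) = {y \<in> C'. sim_delta C' g e (h x0) y}"
      using D_delta_eq[OF CT'[OF e] hin[OF x0(1)] imageI[OF x0D] hD_sub] by blast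
    have "h ` D_delta C f \<eta> D \<subseteq> D_delta C' g e (h ` D)"
      unfolding Deq[OF eta] Deq' using tr hin by blast
    moreover have "x0 \<in> D_delta C f \<eta> D" unfolding Deq[OF eta] using x0(1) sim_refl[OF CT[OF eta]] by blast
    moreover have "D_delta C f \<eta> D \<subseteq> C" unfolding Deq[OF eta] by blast
    ultimately show ?thesis using eta by blast
  qed

  have perj: "\<exists>c b. (\<forall>i. c i \<in> C) \<and> (\<lambda>i. dist ((f ^^ i) (a j)) (c i)) \<longlonglongrightarrow> 0 \<and>
      (\<lambda>i. dist ((g ^^ i) b) (h (c i))) \<longlonglongrightarrow> 0 \<and> b \<in> Vs Y g C' (h ` D)" if j: "j < n" for j
  proof -
    have aV: "a j \<in> Vs X f C D" using assms(17) j by blast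
    have aW: "a j \<in> X" "(\<lambda>i. infdist ((f ^^ i) (a j)) C) \<longlonglongrightarrow> 0"
    proof -
      have "(1::real) \<in> {\<delta>. \<delta> > 0}" by simp
      then have "a j \<in> Ws X f C" using aV unfolding Vs_def by blast
      then show "a j \<in> X" "(\<lambda>i. infdist ((f ^^ i) (a j)) C) \<longlonglongrightarrow> 0" unfolding Ws_def by auto
    qed
    have aD: "(\<lambda>i. infdist ((f ^^ i) (a j)) ((f ^^ i) ` D_delta C f \<eta> D)) \<longlonglongrightarrow> 0" if "\<eta> > 0" for \<eta>
      using aV that unfolding Vs_def by blast
    have Cne: "C \<noteq> {}" using x0 by blast
    obtain c where c: "\<And>i. c i \<in> C" "(\<lambda>i. dist ((f ^^ i) (a j)) (c i)) \<longlonglongrightarrow> 0"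
      using seq_pick[of "\<lambda>i. C", OF Cne aW(2)] by blast
    have faX: "\<And>i. (f ^^ i) (a j) \<in> X" using iter_in[of X f, OF fXinv aW(1)] .
    have cX: "\<And>i. c i \<in> X" using c(1) CX by blast
    have "(\<lambda>i. dist (f (c i)) (f ((f ^^ i) (a j)))) \<longlonglongrightarrow> 0"
      using uc_seq[OF fuc cX faX dist0_commute[OF c(2)]] .
    moreover have "(\<lambda>i. dist ((f ^^ Suc i) (a j)) (c (Suc i))) \<longlonglongrightarrow> 0"
      using LIMSEQ_Suc[OF c(2)] .
    ultimately have po: "(\<lambda>i. dist (f (c i)) (c (Suc i))) \<longlonglongrightarrow> 0"
      using tri0[of "\<lambda>i. f (c i)" "\<lambda>i. f ((f ^^ i) (a j))" "\<lambda>i. c (Suc i)"] by simp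
    have "(\<lambda>i. dist (h (f (c i))) (h (c (Suc i)))) \<longlonglongrightarrow> 0"
      using uc_seq[OF huc finv[OF c(1)] c(1) po] .
    then have po': "(\<lambda>i. dist (g (h (c i))) (h (c (Suc i)))) \<longlonglongrightarrow> 0"
      using hconj[OF c(1)] by simp
    have hcY: "\<And>i. h (c i) \<in> Y" using hin[OF c(1)] CY by blast
    have "\<exists>z\<in>Y. (\<lambda>i. dist ((g ^^ i) z) (h (c i))) \<longlonglongrightarrow> 0"
      by (rule assms(16)[unfolded limit_shadowing_def, rule_format]) (use hcY po' in simp)
    then obtain b where b: "b \<in> Y" "(\<lambda>i. dist ((g ^^ i) b) (h (c i))) \<longlonglongrightarrow> 0" by blast
    have bW: "b \<in> Ws Y g C'" unfolding Ws_def using b infdist_seq_le[OF b(2), of "\<lambda>i. C'"] hin[OF c(1)] by blast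
    have bD: "(\<lambda>i. infdist ((g ^^ i) b) ((g ^^ i) ` D_delta C' g e (h ` D))) \<longlonglongrightarrow> 0" if e: "e > 0" for e
    proof -
      obtain \<eta> where eta: "\<eta> > 0" "D_delta C f \<eta> D \<noteq> {}" "D_delta C f \<eta> D \<subseteq> C"
        "h ` D_delta C f \<eta> D \<subseteq> D_delta C' g e (h ` D)" using hD[OF e] by blast
      have ne: "\<And>i. (f ^^ i) ` D_delta C f \<eta> D \<noteq> {}" using eta(2) by blast
      obtain w where w: "\<And>i. w i \<in> (f ^^ i) ` D_delta C f \<eta> D" "(\<lambda>i. dist ((f ^^ i) (a j)) (w i)) \<longlonglongrightarrow> 0"
        using seq_pick[OF ne aD[OF eta(1)]] by blast
      have wC: "w i \<in> C" for i
      proof -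
        obtain u where u: "u \<in> D_delta C f \<eta> D" "w i = (f ^^ i) u" using w(1)[of i] by blast
        then have "u \<in> C" using eta(3) by blast
        then show ?thesis using u(2) iter_in[of C f, OF finv] by simp
      qed
      have hw: "h (w i) \<in> (g ^^ i) ` D_delta C' g e (h ` D)" for i
      proof -
        obtain u where u: "u \<in> D_delta C f \<eta> D" "w i = (f ^^ i) u" using w(1)[of i] by blast
        have "u \<in> C" using u eta(3) by blast
        then have "h (w i) = (g ^^ i) (h u)" using u(2) iter_conj[of C f h g, OF finv hconj] by simp
        then show ?thesis using u eta(4) by blast
      qed
      have "(\<lambda>i. dist (c i) (w i)) \<longlonglongrightarrow> 0" using tri0[OF dist0_commute[OF c(2)] w(2)] .
      note cw = this
      have "(\<lambda>i. dist (h (c i)) (h (w i))) \<longlonglongrightarrow> 0" apply (rule uc_seq[OF huc]) using c(1) wC cw by auto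
      then have "(\<lambda>i. dist ((g ^^ i) b) (h (w i))) \<longlonglongrightarrow> 0" by (rule tri0[OF b(2)])
      then show ?thesis by (rule infdist_seq_le) (rule hw)
    qed
    have "b \<in> Vs Y g C' (h ` D)" unfolding Vs_def using bW bD by blast
    then show ?thesis using c b by blast
  qed

  define P where "P j c b \<longleftrightarrow> (\<forall>i. c i \<in> C) \<and> (\<lambda>i. dist ((f ^^ i) (a j)) (c i)) \<longlonglongrightarrow> 0 \<and>
      (\<lambda>i. dist ((g ^^ i) b) (h (c i))) \<longlonglongrightarrow> 0 \<and> b \<in> Vs Y g C' (h ` D)" for j c b
  have "\<forall>j\<in>{..<n}. \<exists>c b. P j c b" using perj unfolding P_def by blast
  then have "\<exists>cc. \<forall>j\<in>{..<n}. \<exists>b. P j (cc j) b" by (rule bchoice)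
  then obtain cc where cc: "\<forall>j\<in>{..<n}. \<exists>b. P j (cc j) b" by blast
  then have "\<exists>bb. \<forall>j\<in>{..<n}. P j (cc j) (bb j)" by (rule bchoice)
  then obtain bb where bb: "\<forall>j\<in>{..<n}. P j (cc j) (bb j)" by blast
  have cb: "\<And>j. j < n \<Longrightarrow> (\<forall>i. cc j i \<in> C) \<and> (\<lambda>i. dist ((f ^^ i) (a j)) (cc j i)) \<longlonglongrightarrow> 0 \<and>
      (\<lambda>i. dist ((g ^^ i) (bb j)) (h (cc j i))) \<longlonglongrightarrow> 0 \<and> bb j \<in> Vs Y g C' (h ` D)"
    using bb unfolding P_def by blast
  have ev: "\<forall>\<^sub>F i in sequentially. \<forall>j\<in>{..<n}. dist ((f ^^ i) (a j)) (cc j i) < e \<and> dist ((g ^^ i) (bb j)) (h (cc j i)) < e"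
    if e: "e > 0" for e
  proof (rule eventually_ball_finite)
    show "finite {..<n}" by simp
    show "\<forall>j\<in>{..<n}. \<forall>\<^sub>F i in sequentially. dist ((f ^^ i) (a j)) (cc j i) < e \<and> dist ((g ^^ i) (bb j)) (h (cc j i)) < e"
    proof
      fix j assume "j \<in> {..<n}"
      then have j: "j < n" by simp
      have 1: "\<forall>\<^sub>F i in sequentially. dist (dist ((f ^^ i) (a j)) (cc j i)) 0 < e"
        using cb[OF j] e unfolding tendsto_iff by blast
      have 2: "\<forall>\<^sub>F i in sequentially. dist (dist ((g ^^ i) (bb j)) (h (cc j i))) 0 < e"
        using cb[OF j] e unfolding tendsto_iff by blast
      show "\<forall>\<^sub>F i in sequentially. dist ((f ^^ i) (a j)) (cc j i) < e \<and> dist ((g ^^ i) (bb j)) (h (cc j i)) < e"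
        using eventually_conj[OF 1 2] by simp
    qed
  qed
  have ccC: "\<And>j i. j < n \<Longrightarrow> cc j i \<in> C" using cb by blast
  have upF: "\<And>A B. A \<in> F \<Longrightarrow> A \<subseteq> B \<Longrightarrow> B \<in> F" and tailF: "\<And>A N. A \<in> F \<Longrightarrow> {i \<in> A. i \<ge> N} \<in> F"
    using assms(12) unfolding full_family_def furstenberg_family_def by blast+
  have upG: "\<And>A B. A \<in> G \<Longrightarrow> A \<subseteq> B \<Longrightarrow> B \<in> G" and tailG: "\<And>A N. A \<in> G \<Longrightarrow> {i \<in> A. i \<ge> N} \<in> G"
    using assms(13) unfolding full_family_def furstenberg_family_def by blast+
  have Sa: "S_set f n a \<delta> \<in> F" and Ta: "\<And>\<epsilon>. \<epsilon> > 0 \<Longrightarrow> T_set f n a \<epsilon> \<in> G"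
    using assms(18) unfolding scrambled_def by auto
  obtain d where d: "d > 0" "\<forall>x\<in>C'. \<forall>x'\<in>C'. dist x' x < d \<longrightarrow> dist (h' x') (h' x) < \<delta>/2"
    using h'uc assms(15) unfolding uniformly_continuous_on_def by (meson half_gt_zero)
  have "min (\<delta>/4) (d/4) > 0" using d assms(15) by simp
  then obtain N1 where N1: "\<And>i. i \<ge> N1 \<Longrightarrow> \<forall>j\<in>{..<n}. dist ((f ^^ i) (a j)) (cc j i) < min (\<delta>/4) (d/4) \<and>
      dist ((g ^^ i) (bb j)) (h (cc j i)) < min (\<delta>/4) (d/4)"
    using ev unfolding eventually_sequentially by blast
  have Ssub: "{i \<in> S_set f n a \<delta>. i \<ge> N1} \<subseteq> S_set g n bb (d/2)"
  proof
    fix i assume "i \<in> {i \<in> S_set f n a \<delta>. i \<ge> N1}"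
    then have i: "i \<in> S_set f n a \<delta>" "i \<ge> N1" by auto
    show "i \<in> S_set g n bb (d/2)" unfolding S_set_def
    proof (intro CollectI allI impI)
      fix j k assume jk: "j < k \<and> k < n"
      then have jn: "j < n" by simp
      have 1: "dist ((f ^^ i) (a j)) ((f ^^ i) (a k)) > \<delta>" using i(1) jk unfolding S_set_def by blast
      have 2: "dist ((f ^^ i) (a j)) (cc j i) < \<delta>/4" "dist ((f ^^ i) (a k)) (cc k i) < \<delta>/4"
        "dist ((g ^^ i) (bb j)) (h (cc j i)) < d/4" "dist ((g ^^ i) (bb k)) (h (cc k i)) < d/4"
        using N1[OF i(2)] jk by auto
      have 3: "dist ((f ^^ i) (a j)) ((f ^^ i) (a k)) \<le> dist ((f ^^ i) (a j)) (cc j i) + dist (cc j i) (cc k i) + dist (cc k i) ((f ^^ i) (a k))"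
        by (rule dist4)
      have "dist (cc j i) (cc k i) > \<delta>/2" using 1 2 3 by (simp add: dist_commute)
      have 4: "dist (h (cc j i)) (h (cc k i)) \<ge> d"
      proof (rule ccontr)
        assume "\<not> ?thesis"
        then have "dist (h (cc k i)) (h (cc j i)) < d" by (simp add: dist_commute)
        then have "dist (h' (h (cc k i))) (h' (h (cc j i))) < \<delta>/2" using d(2) hin ccC jk jn by auto
        then have "dist (cc k i) (cc j i) < \<delta>/2" using hC(3) ccC jk jn by auto
        then show False using \<open>dist (cc j i) (cc k i) > \<delta>/2\<close> by (simp add: dist_commute)
      qed
      have 5: "dist (h (cc j i)) (h (cc k i)) \<le> dist (h (cc j i)) ((g ^^ i) (bb j)) + dist ((g ^^ i) (bb j)) ((g ^^ i) (bb k)) + dist ((g ^^ i) (bb k)) (h (cc k i))"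
        by (rule dist4)
      show "dist ((g ^^ i) (bb j)) ((g ^^ i) (bb k)) > d/2" using 2 4 5 by (simp add: dist_commute)
    qed
  qed
  have Sg: "S_set g n bb (d/2) \<in> F" using upF[OF tailF[OF Sa] Ssub] .
  have Tg: "T_set g n bb \<epsilon> \<in> G" if eps: "\<epsilon> > 0" for \<epsilon>
  proof -
    obtain \<eta> where eta: "\<eta> > 0" "\<forall>x\<in>C. \<forall>x'\<in>C. dist x' x < \<eta> \<longrightarrow> dist (h x') (h x) < \<epsilon>/3"
      using huc eps unfolding uniformly_continuous_on_def by (metis divide_pos_pos zero_less_numeral)
    have "min (\<eta>/3) (\<epsilon>/3) > 0" using eta eps by simp
    then obtain N2 where N2: "\<And>i. i \<ge> N2 \<Longrightarrow> \<forall>j\<in>{..<n}. dist ((f ^^ i) (a j)) (cc j i) < min (\<eta>/3) (\<epsilon>/3) \<and>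
        dist ((g ^^ i) (bb j)) (h (cc j i)) < min (\<eta>/3) (\<epsilon>/3)"
      using ev unfolding eventually_sequentially by blast
    have Tsub: "{i \<in> T_set f n a (\<eta>/3). i \<ge> N2} \<subseteq> T_set g n bb \<epsilon>"
    proof
      fix i assume "i \<in> {i \<in> T_set f n a (\<eta>/3). i \<ge> N2}"
      then have i: "i \<in> T_set f n a (\<eta>/3)" "i \<ge> N2" by auto
      show "i \<in> T_set g n bb \<epsilon>" unfolding T_set_def
      proof (intro CollectI allI impI)
        fix j k assume jk: "j < k \<and> k < n"
        then have jn: "j < n" by simp
        have 1: "dist ((f ^^ i) (a j)) ((f ^^ i) (a k)) < \<eta>/3" using i(1) jk unfolding T_set_def by blast
        have 2: "dist ((f ^^ i) (a j)) (cc j i) < \<eta>/3" "dist ((f ^^ i) (a k)) (cc k i) < \<eta>/3"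
          "dist ((g ^^ i) (bb j)) (h (cc j i)) < \<epsilon>/3" "dist ((g ^^ i) (bb k)) (h (cc k i)) < \<epsilon>/3"
          using N2[OF i(2)] jk by auto
        have 3: "dist (cc j i) (cc k i) \<le> dist (cc j i) ((f ^^ i) (a j)) + dist ((f ^^ i) (a j)) ((f ^^ i) (a k)) + dist ((f ^^ i) (a k)) (cc k i)"
          by (rule dist4)
        have "dist (cc j i) (cc k i) < \<eta>" using 1 2 3 by (simp add: dist_commute)
        then have 4: "dist (h (cc j i)) (h (cc k i)) < \<epsilon>/3" using eta(2) ccC jk jn by (metis dist_commute less_trans)
        have 5: "dist ((g ^^ i) (bb j)) ((g ^^ i) (bb k)) \<le> dist ((g ^^ i) (bb j)) (h (cc j i)) + dist (h (cc j i)) (h (cc k i)) + dist (h (cc k i)) ((g ^^ i) (bb k))"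
          by (rule dist4)
        show "dist ((g ^^ i) (bb j)) ((g ^^ i) (bb k)) < \<epsilon>" using 2 4 5 by (simp add: dist_commute)
      qed
    qed
    show ?thesis using upG[OF tailG[OF Ta[of "\<eta>/3"]] Tsub] eta by simp
  qed
  have "\<forall>j<n. bb j \<in> Vs Y g C' (h ` D)" using cb by blast
  moreover have "scrambled g F G (d/2) n bb" unfolding scrambled_def using Sg Tg by blast
  ultimately show ?thesis using d(1) by (intro exI[of _ "d/2"]) auto
qed
end
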